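(* There is no symmetric $2$-$(36,15,6)$ design admitting an automorphism of order two that fixes exactly $18$ points, and there is no symmetric $2$-$(36,15,6)$ design admitting an automorphism of order two that fixes exactly $14$ points. *)

theory Defs
  imports Main "HOL-Library.Multiset"
begin

definition symmetric_design :: "'a set \<Rightarrow> 'a set multiset \<Rightarrow> nat \<Rightarrow> nat \<Rightarrow> nat \<Rightarrow> bool" where
  "symmetric_design P B v k lam \<longleftrightarrow>
     finite P \<and> card P = v \<and> size B = v \<and>
     (\<forall>b\<in>#B. b \<subseteq> P \<and> card b = k) \<and>
     (\<forall>x\<in>P. \<forall>y\<in>P. x \<noteq> y \<longrightarrow> size (filter_mset (\<lambda>b. x \<in> b \<and> y \<in> b) B) = lam)"

definition design_automorphism :: "'a set \<Rightarrow> 'a set multiset \<Rightarrow> ('a \<Rightarrow> 'a) \<Rightarrow> bool" where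
  "design_automorphism P B \<sigma> \<longleftrightarrow> bij_betw \<sigma> P P \<and> image_mset (\<lambda>b. \<sigma> ` b) B = B"

definition order_two_on :: "'a set \<Rightarrow> ('a \<Rightarrow> 'a) \<Rightarrow> bool" where
  "order_two_on P \<sigma> \<longleftrightarrow> (\<forall>x\<in>P. \<sigma> (\<sigma> x) = x) \<and> (\<exists>x\<in>P. \<sigma> x \<noteq> x)"

end

theory Submission
  imports Defs
begin

lemma card_int_sum: "finite A \<Longrightarrow> int (card {x\<in>A. Q x}) = (\<Sum>x\<in>A. if Q x then 1 else 0)"
  by (simp add: sum.inter_filter[symmetric])

lemma even_inv: "\<forall>c\<in>#M. g c \<noteq> c \<Longrightarrow> \<forall>c\<in>#M. g (g c) = c \<Longrightarrow> image_mset g M = M \<Longrightarrow> even (size M)"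
proof (induction "size M" arbitrary: M rule: less_induct)
  case less
  show ?case
  proof (cases "M = {#}")
    case True then show ?thesis by simp
  next
    case False
    then obtain c where c: "c \<in># M" by (meson multiset_nonemptyE)
    have "g c \<in># image_mset g M" using c by simp
    hence gc: "g c \<in># M" using less.prems(3) by simp
    have ne: "g c \<noteq> c" using less.prems(1) c by blast
    have ggc: "g (g c) = c" using less.prems(2) c by blast
    obtain M1 where M1: "M = add_mset c M1" using c by (metis mset_add)
    have "g c \<in># M1" using gc ne M1 by simp
    then obtain M2 where M2: "M1 = add_mset (g c) M2" by (metis mset_add)
    have MM: "M = add_mset c (add_mset (g c) M2)" using M1 M2 by simp
    have "image_mset g M = add_mset c (add_mset (g c) (image_mset g M2))"
      using MM ggc by (simp add: add_mset_commute)
    hence im: "image_mset g M2 = M2" using less.prems(3) MM by simp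
    have "even (size M2)"
      by (rule less.hyps) (use MM less.prems im in auto)
    thus ?thesis using MM by simp
  qed
qed

lemma sign_sum: fixes g :: "'b \<Rightarrow> int" assumes "finite A" "\<forall>i\<in>A. g i = -1 \<or> g i = 0 \<or> g i = 1"
  shows "sum g A = int (card {i\<in>A. g i = 1}) - int (card {i\<in>A. g i = -1})"
    and "card {i\<in>A. g i \<noteq> 0} = card {i\<in>A. g i = 1} + card {i\<in>A. g i = -1}"
proof -
  have "sum g A = (\<Sum>i\<in>A. (if g i = 1 then 1 else 0) - (if g i = -1 then 1 else 0))"
    by (rule sum.cong) (use assms(2) in auto)
  thus "sum g A = int (card {i\<in>A. g i = 1}) - int (card {i\<in>A. g i = -1})"
    by (simp add: sum_subtractf card_int_sum[OF assms(1)])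
  have "{i\<in>A. g i \<noteq> 0} = {i\<in>A. g i = 1} \<union> {i\<in>A. g i = -1}" using assms(2) by auto
  moreover have "card ({i\<in>A. g i = 1} \<union> {i\<in>A. g i = -1}) = card {i\<in>A. g i = 1} + card {i\<in>A. g i = -1}"
    by (rule card_Un_disjoint) (use assms(1) in auto)
  ultimately show "card {i\<in>A. g i \<noteq> 0} = card {i\<in>A. g i = 1} + card {i\<in>A. g i = -1}" by simp
qed

locale invdes =
  fixes P :: "'a set" and bs :: "'a set list" and \<sigma> :: "'a \<Rightarrow> 'a"
  assumes fin: "finite P" and cardP: "card P = 36" and len: "length bs = 36"
    and blk: "\<And>i. i < 36 \<Longrightarrow> bs!i \<subseteq> P \<and> card (bs!i) = 15"
    and lam: "\<And>x y. x\<in>P \<Longrightarrow> y\<in>P \<Longrightarrow> x\<noteq>y \<Longrightarrow> card {i\<in>{..<36}. x \<in> bs!i \<and> y \<in> bs!i} = 6"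
    and bij: "bij_betw \<sigma> P P"
    and inv: "\<And>x. x\<in>P \<Longrightarrow> \<sigma> (\<sigma> x) = x"
    and aut: "image_mset (\<lambda>b. \<sigma>`b) (mset bs) = mset bs"
begin

lemma rep: assumes x: "x\<in>P" shows "card {i\<in>{..<36::nat}. x \<in> bs!i} = 15"
proof -
  have c35: "card (P-{x}) = 35" using x fin cardP by simp
  have "(\<Sum>y\<in>P-{x}. int (card {i\<in>{..<36::nat}. x\<in>bs!i \<and> y\<in>bs!i})) = (\<Sum>y\<in>P-{x}. 6)"
    by (rule sum.cong) (use lam x in auto)
  also have "\<dots> = 210" using c35 by simp
  finally have A: "(\<Sum>y\<in>P-{x}. int (card {i\<in>{..<36::nat}. x\<in>bs!i \<and> y\<in>bs!i})) = 210" .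
  have "(\<Sum>y\<in>P-{x}. int (card {i\<in>{..<36::nat}. x\<in>bs!i \<and> y\<in>bs!i}))
      = (\<Sum>y\<in>P-{x}. \<Sum>i<36. if x\<in>bs!i \<and> y\<in>bs!i then 1 else 0)"
    by (simp only: card_int_sum[OF finite_lessThan])
  also have "\<dots> = (\<Sum>i<36. \<Sum>y\<in>P-{x}. if x\<in>bs!i \<and> y\<in>bs!i then 1 else 0)"
    by (rule sum.swap)
  also have "\<dots> = (\<Sum>i<36. if x\<in>bs!i then 14 else 0)"
  proof (rule sum.cong)
    fix i assume i: "i \<in> {..<36::nat}"
    show "(\<Sum>y\<in>P-{x}. if x\<in>bs!i \<and> y\<in>bs!i then 1 else 0) = (if x\<in>bs!i then 14 else (0::int))"
    proof (cases "x\<in>bs!i")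
      case True
      have "(\<Sum>y\<in>P-{x}. if x\<in>bs!i \<and> y\<in>bs!i then 1 else 0) = int (card {y\<in>P-{x}. y\<in>bs!i})"
        using True fin by (simp only: card_int_sum[of "P-{x}"] finite_Diff simp_thms)
      also have "{y\<in>P-{x}. y\<in>bs!i} = bs!i - {x}" using blk[of i] i by auto
      also have "card (bs!i - {x}) = 14" using blk[of i] i True fin
        by (simp add: finite_subset)
      finally show ?thesis using True by simp
    qed simp
  qed simp
  also have "\<dots> = 14 * int (card {i\<in>{..<36::nat}. x \<in> bs!i})"
    by (simp only: card_int_sum[OF finite_lessThan] sum_distrib_left) (rule sum.cong, auto)
  finally show ?thesis using A by simp
qed

lemma blkP: "i < 36 \<Longrightarrow> bs!i \<subseteq> P" using blk by blast
lemma blkc: "i < 36 \<Longrightarrow> card (bs!i) = 15" using blk by blast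
lemma blkfin: "i < 36 \<Longrightarrow> finite (bs!i)" using blkP fin finite_subset by blast

lemma cnt_pt: assumes "p \<in> P" "i < 36" "p \<in> bs!i"
  shows "card {j\<in>{..<36::nat}-{i}. p \<in> bs!j} = 14"
proof -
  have "{j\<in>{..<36::nat}-{i}. p \<in> bs!j} = {j\<in>{..<36::nat}. p \<in> bs!j} - {i}" by auto
  moreover have "i \<in> {j\<in>{..<36::nat}. p \<in> bs!j}" using assms by auto
  ultimately show ?thesis using rep[OF assms(1)] by simp
qed

lemma cnt_pr: assumes "p \<in> P" "q \<in> P" "p \<noteq> q" "i < 36" "p \<in> bs!i" "q \<in> bs!i"
  shows "card {j\<in>{..<36::nat}-{i}. p \<in> bs!j \<and> q \<in> bs!j} = 5"
proof -
  have "{j\<in>{..<36::nat}-{i}. p \<in> bs!j \<and> q \<in> bs!j} = {j\<in>{..<36::nat}. p \<in> bs!j \<and> q \<in> bs!j} - {i}" by auto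
  moreover have "i \<in> {j\<in>{..<36::nat}. p \<in> bs!j \<and> q \<in> bs!j}" using assms by auto
  ultimately show ?thesis using lam[OF assms(1-3)] by simp
qed

lemma dual: assumes i: "i < 36" and j: "j < 36" and ij: "i \<noteq> j"
  shows "card (bs!i \<inter> bs!j) = 6"
proof -
  define c where "c = bs!i"
  define J where "J = {..<36::nat} - {i}"
  define x where "x = (\<lambda>j. int (card (c \<inter> bs!j)))"
  have fc: "finite c" using blkfin i c_def by simp
  have cP: "c \<subseteq> P" using blkP i c_def by simp
  have cc: "card c = 15" using blkc i c_def by simp
  have fJ: "finite J" unfolding J_def by simp
  have cJ: "card J = 35" unfolding J_def using i by simp
  have xs: "x j = (\<Sum>p\<in>c. if p \<in> bs!j then 1 else 0)" for j
  proof -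
    have "c \<inter> bs!j = {p\<in>c. p\<in>bs!j}" by auto
    thus ?thesis unfolding x_def using card_int_sum[OF fc, of "\<lambda>p. p \<in> bs!j"] by simp
  qed
  have S1: "(\<Sum>j\<in>J. x j) = 210"
  proof -
    have "(\<Sum>j\<in>J. x j) = (\<Sum>j\<in>J. \<Sum>p\<in>c. if p \<in> bs!j then 1 else 0)" using xs by simp
    also have "\<dots> = (\<Sum>p\<in>c. \<Sum>j\<in>J. if p \<in> bs!j then 1 else 0)" by (rule sum.swap)
    also have "\<dots> = (\<Sum>p\<in>c. 14)"
    proof (rule sum.cong[OF refl])
      fix p assume p: "p \<in> c"
      have "(\<Sum>j\<in>J. if p \<in> bs!j then 1 else 0) = int (card {j\<in>J. p \<in> bs!j})"
        using card_int_sum[OF fJ] by simp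
      also have "\<dots> = 14" unfolding J_def using cnt_pt[of p i] p cP i c_def by auto
      finally show "(\<Sum>j\<in>J. if p \<in> bs!j then 1 else 0) = (14::int)" .
    qed
    also have "\<dots> = 210" using cc by simp
    finally show ?thesis .
  qed
  have S2: "(\<Sum>j\<in>J. (x j)^2) = 1260"
  proof -
    have "(\<Sum>j\<in>J. (x j)^2) = (\<Sum>j\<in>J. \<Sum>p\<in>c. \<Sum>q\<in>c. if p \<in> bs!j \<and> q \<in> bs!j then 1 else 0)"
    proof (rule sum.cong[OF refl])
      fix j
      have "(x j)^2 = (\<Sum>p\<in>c. if p \<in> bs!j then 1 else 0) * (\<Sum>q\<in>c. if q \<in> bs!j then 1 else 0)"
        using xs by (simp add: power2_eq_square)
      also have "\<dots> = (\<Sum>p\<in>c. \<Sum>q\<in>c. if p \<in> bs!j \<and> q \<in> bs!j then 1 else 0)"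
        by (simp add: sum_product if_distrib cong: if_cong) (rule sum.cong, simp, rule sum.cong, auto)
      finally show "(x j)^2 = \<dots>" .
    qed
    also have "\<dots> = (\<Sum>p\<in>c. \<Sum>q\<in>c. \<Sum>j\<in>J. if p \<in> bs!j \<and> q \<in> bs!j then 1 else 0)"
      by (simp only: sum.swap[of _ J])
    also have "\<dots> = (\<Sum>p\<in>c. \<Sum>q\<in>c. 5 + (if p = q then 9 else 0))"
    proof (intro sum.cong refl)
      fix p q assume p: "p \<in> c" and q: "q \<in> c"
      have "(\<Sum>j\<in>J. if p \<in> bs!j \<and> q \<in> bs!j then 1 else 0) = int (card {j\<in>J. p \<in> bs!j \<and> q \<in> bs!j})"
        using card_int_sum[OF fJ] by simp
      also have "\<dots> = 5 + (if p = q then 9 else 0)"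
      proof (cases "p = q")
        case True thus ?thesis unfolding J_def using cnt_pt[of p i] p cP i c_def by auto
      next
        case False thus ?thesis unfolding J_def using cnt_pr[of p q i] p q cP i c_def by auto
      qed
      finally show "(\<Sum>j\<in>J. if p \<in> bs!j \<and> q \<in> bs!j then 1 else 0) = (5 + (if p = q then 9 else 0) :: int)" .
    qed
    also have "\<dots> = (\<Sum>p\<in>c. 84)"
      using fc cc by (simp add: sum.distrib)
    also have "\<dots> = 1260" using cc by simp
    finally show ?thesis .
  qed
  have "(\<Sum>j\<in>J. (x j - 6)^2) = (\<Sum>j\<in>J. (x j)^2) - 12 * (\<Sum>j\<in>J. x j) + 36 * int (card J)"
    by (simp add: power2_diff sum.distrib sum_subtractf sum_distrib_left sum_distrib_right power2_eq_square algebra_simps)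
  also have "\<dots> = 0" using S1 S2 cJ by simp
  finally have "(\<Sum>j\<in>J. (x j - 6)^2) = 0" .
  hence "\<forall>j\<in>J. (x j - 6)^2 = 0" using fJ by (simp add: sum_nonneg_eq_0_iff)
  moreover have "j \<in> J" using j ij unfolding J_def by simp
  ultimately have "x j = 6" by simp
  thus ?thesis unfolding x_def c_def by simp
qed

lemma sP: "x \<in> P \<Longrightarrow> \<sigma> x \<in> P" by (rule bij_betw_apply[OF bij])
lemma mem_img: "c \<subseteq> P \<Longrightarrow> y \<in> P \<Longrightarrow> (y \<in> \<sigma>`c) = (\<sigma> y \<in> c)"
proof
  assume "c \<subseteq> P" "y \<in> P" "y \<in> \<sigma>`c"
  then obtain z where "z \<in> c" "y = \<sigma> z" by auto
  thus "\<sigma> y \<in> c" using inv \<open>c \<subseteq> P\<close> by auto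
next
  assume "c \<subseteq> P" "y \<in> P" "\<sigma> y \<in> c"
  thus "y \<in> \<sigma>`c" using inv[of y] image_eqI[of y \<sigma> "\<sigma> y" c] by simp
qed
lemma img_sub: "c \<subseteq> P \<Longrightarrow> \<sigma>`c \<subseteq> P" using sP by auto
lemma img_img: "c \<subseteq> P \<Longrightarrow> \<sigma>`(\<sigma>`c) = c"
proof -
  assume c: "c \<subseteq> P"
  have "\<sigma>`(\<sigma>`c) = (\<lambda>x. \<sigma> (\<sigma> x))`c" by (simp add: image_image)
  also have "\<dots> = id`c" by (rule image_cong) (use c inv in auto)
  finally show ?thesis by simp
qed
lemma img_in: assumes "i < 36" shows "\<exists>j<36. bs!j = \<sigma>`(bs!i)"
proof -
  have "\<sigma>`(bs!i) \<in># image_mset (\<lambda>b. \<sigma>`b) (mset bs)" using assms len by simp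
  hence "\<sigma>`(bs!i) \<in> set bs" using aut by simp
  thus ?thesis using len by (metis in_set_conv_nth)
qed

definition sepr :: "'a \<Rightarrow> nat \<Rightarrow> bool" where "sepr y i \<longleftrightarrow> (y \<in> bs!i) \<noteq> (\<sigma> y \<in> bs!i)"
definition nfb :: "nat \<Rightarrow> bool" where "nfb i \<longleftrightarrow> \<sigma>`(bs!i) \<noteq> bs!i"
definition NF where "NF = {x\<in>P. \<sigma> x \<noteq> x}"
definition NB where "NB = {i\<in>{..<36::nat}. nfb i}"

lemma card_split: "finite A \<Longrightarrow> card {i\<in>A. Q i \<and> R i} + card {i\<in>A. Q i \<and> \<not> R i} = card {i\<in>A. Q i}"
proof -
  assume A: "finite A"
  have "{i\<in>A. Q i} = {i\<in>A. Q i \<and> R i} \<union> {i\<in>A. Q i \<and> \<not> R i}" by auto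
  moreover have "card ({i\<in>A. Q i \<and> R i} \<union> {i\<in>A. Q i \<and> \<not> R i}) = card {i\<in>A. Q i \<and> R i} + card {i\<in>A. Q i \<and> \<not> R i}"
    by (rule card_Un_disjoint) (use A in auto)
  ultimately show ?thesis by simp
qed

lemma sep_fix: assumes i: "i < 36" and n: "\<not> nfb i" and y: "y \<in> P" shows "\<not> sepr y i"
proof -
  have e: "\<sigma>`(bs!i) = bs!i" using n unfolding nfb_def by simp
  have "(y \<in> \<sigma>`(bs!i)) = (\<sigma> y \<in> bs!i)" using mem_img[OF blkP[OF i] y] .
  thus ?thesis unfolding sepr_def using e by simp
qed

lemma sep_blk: assumes i: "i < 36" and nf: "nfb i" shows "card {y\<in>P. sepr y i} = 18"
proof -
  define c where "c = bs!i"
  obtain j where j: "j < 36" "bs!j = \<sigma>`c" using img_in[OF i] c_def by blast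
  have ij: "i \<noteq> j" using nf j unfolding nfb_def c_def by auto
  define c' where "c' = bs!j"
  have I: "card (c \<inter> c') = 6" using dual[OF i j(1) ij] c_def c'_def by simp
  have cP: "c \<subseteq> P" "c' \<subseteq> P" using blkP i j c_def c'_def by auto
  have fc: "finite c" "finite c'" using cP fin finite_subset by auto
  have cc: "card c = 15" "card c' = 15" using blkc[OF i] blkc[OF j(1)] unfolding c_def c'_def by auto
  have key: "\<And>y. y\<in>P \<Longrightarrow> sepr y i = ((y\<in>c) \<noteq> (y\<in>c'))"
    using mem_img[OF cP(1)] j(2) unfolding sepr_def c_def c'_def by simp
  have "{y\<in>P. sepr y i} = (c - c') \<union> (c' - c)"
  proof (rule set_eqI)
    fix y show "y \<in> {y\<in>P. sepr y i} \<longleftrightarrow> y \<in> (c - c') \<union> (c' - c)"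
    proof (cases "y \<in> P")
      case True thus ?thesis using key[OF True] by auto
    next
      case False thus ?thesis using cP by auto
    qed
  qed
  moreover have "card ((c - c') \<union> (c' - c)) = card (c - c') + card (c' - c)"
    by (rule card_Un_disjoint) (use fc in auto)
  moreover have "card (c - c') = 9" using card_Diff_subset_Int[of c c'] fc I cc by simp
  moreover have "card (c' - c) = 9" using card_Diff_subset_Int[of c' c] fc I cc by (simp add: Int_commute)
  ultimately show ?thesis by simp
qed

lemma sep_pt: assumes y: "y \<in> P" and ny: "\<sigma> y \<noteq> y" shows "card {i\<in>{..<36::nat}. sepr y i} = 18"
proof -
  have sy: "\<sigma> y \<in> P" using sP y by simp
  have a: "card {i\<in>{..<36::nat}. y \<in> bs!i \<and> \<sigma> y \<notin> bs!i} = 9"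
    using card_split[of "{..<36::nat}" "\<lambda>i. y \<in> bs!i" "\<lambda>i. \<sigma> y \<in> bs!i"] rep[OF y] lam[OF y sy ny[symmetric]] by simp
  have b: "card {i\<in>{..<36::nat}. \<sigma> y \<in> bs!i \<and> y \<notin> bs!i} = 9"
    using card_split[of "{..<36::nat}" "\<lambda>i. \<sigma> y \<in> bs!i" "\<lambda>i. y \<in> bs!i"] rep[OF sy] lam[OF sy y ny] by (simp add: conj_commute)
  have "{i\<in>{..<36::nat}. sepr y i} = {i\<in>{..<36::nat}. y \<in> bs!i \<and> \<sigma> y \<notin> bs!i} \<union> {i\<in>{..<36::nat}. \<sigma> y \<in> bs!i \<and> y \<notin> bs!i}"
    unfolding sepr_def by blast
  moreover have "card (\<dots>) = 18" by (subst card_Un_disjoint) (use a b in auto)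
  ultimately show ?thesis by simp
qed

lemma NB_NF: "card NB = card NF"
proof -
  have "(\<Sum>i<36. int (card {y\<in>P. sepr y i})) = (\<Sum>i<36. \<Sum>y\<in>P. if sepr y i then 1 else 0)"
    using card_int_sum[OF fin] by simp
  also have "\<dots> = (\<Sum>y\<in>P. \<Sum>i<36. if sepr y i then 1 else 0)" by (rule sum.swap)
  also have "\<dots> = (\<Sum>y\<in>P. int (card {i\<in>{..<36::nat}. sepr y i}))"
    by (simp only: card_int_sum[OF finite_lessThan])
  finally have E: "(\<Sum>i<36. int (card {y\<in>P. sepr y i})) = (\<Sum>y\<in>P. int (card {i\<in>{..<36::nat}. sepr y i}))" .
  have "(\<Sum>i<36. int (card {y\<in>P. sepr y i})) = (\<Sum>i<36. if nfb i then 18 else 0)"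
  proof (rule sum.cong[OF refl])
    fix i assume "i \<in> {..<36::nat}"
    hence i: "i < 36" by simp
    show "int (card {y\<in>P. sepr y i}) = (if nfb i then 18 else 0)"
    proof (cases "nfb i")
      case True thus ?thesis using sep_blk[OF i] by simp
    next
      case False hence "{y\<in>P. sepr y i} = {}" using sep_fix[OF i] by auto
      hence "card {y\<in>P. sepr y i} = 0" by (metis card.empty)
      thus ?thesis using False by simp
    qed
  qed
  also have "\<dots> = 18 * int (card NB)" unfolding NB_def
    by (simp only: card_int_sum[OF finite_lessThan] sum_distrib_left) (rule sum.cong, auto)
  finally have L: "(\<Sum>i<36. int (card {y\<in>P. sepr y i})) = 18 * int (card NB)" .
  have "(\<Sum>y\<in>P. int (card {i\<in>{..<36::nat}. sepr y i})) = (\<Sum>y\<in>P. if \<sigma> y \<noteq> y then 18 else 0)"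
  proof (rule sum.cong[OF refl])
    fix y assume y: "y \<in> P"
    show "int (card {i\<in>{..<36::nat}. sepr y i}) = (if \<sigma> y \<noteq> y then 18 else 0)"
    proof (cases "\<sigma> y \<noteq> y")
      case True thus ?thesis using sep_pt[OF y] by simp
    next
      case False hence "{i\<in>{..<36::nat}. sepr y i} = {}" unfolding sepr_def by auto
      hence "card {i\<in>{..<36::nat}. sepr y i} = 0" by (metis card.empty)
      thus ?thesis using False by simp
    qed
  qed
  also have "\<dots> = 18 * int (card NF)" unfolding NF_def
    by (simp only: card_int_sum[OF fin] sum_distrib_left) (rule sum.cong, auto)
  finally have R: "(\<Sum>y\<in>P. int (card {i\<in>{..<36::nat}. sepr y i})) = 18 * int (card NF)" .
  have "(18::int) * int (card NB) = 18 * int (card NF)" using E L R by linarith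
  thus ?thesis by simp
qed

definition ev :: "'a \<Rightarrow> 'a set \<Rightarrow> int" where
  "ev y c = (if y \<in> c then 1 else 0) - (if \<sigma> y \<in> c then 1 else 0)"

lemma ev_flip: assumes "c \<subseteq> P" "y \<in> P" shows "ev y (\<sigma>`c) = - ev y c"
  using mem_img[OF assms] mem_img[OF assms(1) sP[OF assms(2)]] inv[OF assms(2)] unfolding ev_def by simp

lemma ev_vals: "ev y c = -1 \<or> ev y c = 0 \<or> ev y c = 1" unfolding ev_def by auto

lemma ev_sep: "(ev y (bs!i) \<noteq> 0) = sepr y i" unfolding ev_def sepr_def by auto

lemma esum0: assumes y: "y \<in> P" and y': "y' \<in> P" and d1: "y \<noteq> y'" and d2: "y' \<noteq> \<sigma> y"
  shows "(\<Sum>i<36. ev y (bs!i) * ev y' (bs!i)) = 0"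
proof -
  have sy: "\<sigma> y \<in> P" "\<sigma> y' \<in> P" using sP y y' by auto
  have d3: "y \<noteq> \<sigma> y'" using d2 inv[OF y'] by auto
  have d4: "\<sigma> y \<noteq> \<sigma> y'" using d1 inv[OF y] inv[OF y'] by metis
  define f where "f = (\<lambda>a b i. if a \<in> bs!i \<and> b \<in> bs!i then 1 else (0::int))"
  have F: "\<And>a b. a \<in> P \<Longrightarrow> b \<in> P \<Longrightarrow> a \<noteq> b \<Longrightarrow> (\<Sum>i<36. f a b i) = 6"
  proof -
    fix a b assume "a \<in> P" "b \<in> P" "a \<noteq> b"
    hence "int (card {i\<in>{..<36::nat}. a \<in> bs!i \<and> b \<in> bs!i}) = 6" using lam by simp
    thus "(\<Sum>i<36. f a b i) = 6" unfolding f_def by (simp only: card_int_sum[OF finite_lessThan])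
  qed
  have "(\<Sum>i<36. ev y (bs!i) * ev y' (bs!i)) = (\<Sum>i<36. f y y' i - f y (\<sigma> y') i - f (\<sigma> y) y' i + f (\<sigma> y) (\<sigma> y') i)"
    by (rule sum.cong) (auto simp: ev_def f_def)
  also have "\<dots> = (\<Sum>i<36. f y y' i) - (\<Sum>i<36. f y (\<sigma> y') i) - (\<Sum>i<36. f (\<sigma> y) y' i) + (\<Sum>i<36. f (\<sigma> y) (\<sigma> y') i)"
    by (simp add: sum.distrib sum_subtractf)
  also have "\<dots> = 0" using F[OF y y' d1] F[OF y sy(2) d3] F[OF sy(1) y' d2[symmetric]] F[OF sy d4] by simp
  finally show ?thesis .
qed

lemma parity: assumes y: "y \<in> P" and y': "y' \<in> P"
  shows "even (card {i\<in>{..<36::nat}. ev y (bs!i) * ev y' (bs!i) = -1})"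
proof -
  define Q where "Q = (\<lambda>c. ev y c * ev y' c = -1)"
  define M where "M = filter_mset Q (mset bs)"
  have "size M = card {i. i < length bs \<and> Q (bs!i)}"
    unfolding M_def by (simp flip: mset_filter add: length_filter_conv_card)
  also have "{i. i < length bs \<and> Q (bs!i)} = {i\<in>{..<36::nat}. ev y (bs!i) * ev y' (bs!i) = -1}"
    using len unfolding Q_def by auto
  finally have sz: "size M = card {i\<in>{..<36::nat}. ev y (bs!i) * ev y' (bs!i) = -1}" .
  have subP: "\<And>c. c \<in># mset bs \<Longrightarrow> c \<subseteq> P" using blkP len by (metis in_set_conv_nth set_mset_mset)
  have QQ: "\<And>c. c \<in># mset bs \<Longrightarrow> Q (\<sigma>`c) = Q c"
    unfolding Q_def using ev_flip[OF subP y] ev_flip[OF subP y'] by simp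
  have "image_mset (\<lambda>b. \<sigma>`b) M = filter_mset Q (image_mset (\<lambda>b. \<sigma>`b) (mset bs))"
  proof -
    have "filter_mset (\<lambda>c. Q (\<sigma>`c)) (mset bs) = M" unfolding M_def
      by (rule filter_mset_cong) (use QQ in auto)
    thus ?thesis using image_mset_filter_mset_swap[of "\<lambda>b. \<sigma>`b" Q "mset bs"] by simp
  qed
  hence im: "image_mset (\<lambda>b. \<sigma>`b) M = M" using aut M_def by simp
  have ne: "\<forall>c\<in>#M. \<sigma>`c \<noteq> c"
  proof
    fix c assume c: "c \<in># M"
    hence cb: "c \<in># mset bs" "Q c" unfolding M_def by auto
    show "\<sigma>`c \<noteq> c"
    proof
      assume e: "\<sigma>`c = c"
      have "ev y c = 0" using ev_flip[OF subP[OF cb(1)] y] e by simp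
      thus False using cb(2) unfolding Q_def by simp
    qed
  qed
  have gg: "\<forall>c\<in>#M. \<sigma>`(\<sigma>`c) = c" using img_img subP unfolding M_def by auto
  have "even (size M)" by (rule even_inv[OF ne gg im])
  thus ?thesis using sz by simp
qed

lemma NF_card: "card NF = 36 - card {x\<in>P. \<sigma> x = x}"
proof -
  have "P = {x\<in>P. \<sigma> x = x} \<union> NF" unfolding NF_def by auto
  moreover have "card ({x\<in>P. \<sigma> x = x} \<union> NF) = card {x\<in>P. \<sigma> x = x} + card NF"
    by (rule card_Un_disjoint) (use fin in \<open>auto simp: NF_def\<close>)
  ultimately show ?thesis using cardP by simp
qed

lemma sep_nf: "y \<in> P \<Longrightarrow> sepr y i \<Longrightarrow> y \<in> NF" unfolding sepr_def NF_def by auto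
lemma sep_nb: "i < 36 \<Longrightarrow> y \<in> P \<Longrightarrow> sepr y i \<Longrightarrow> i \<in> NB" using sep_fix unfolding NB_def by auto
lemma NF_P: "NF \<subseteq> P" unfolding NF_def by auto
lemma finNF: "finite NF" using NF_P fin finite_subset by auto
lemma sNF: "y \<in> NF \<Longrightarrow> \<sigma> y \<in> NF \<and> \<sigma> y \<noteq> y" unfolding NF_def using sP inv by auto

lemma gvals: "\<forall>i\<in>A. ev y (bs!i) * ev y' (bs!i) = -1 \<or> ev y (bs!i) * ev y' (bs!i) = 0 \<or> ev y (bs!i) * ev y' (bs!i) = 1"
proof
  fix i show "ev y (bs!i) * ev y' (bs!i) = -1 \<or> ev y (bs!i) * ev y' (bs!i) = 0 \<or> ev y (bs!i) * ev y' (bs!i) = 1"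
    using ev_vals[of y "bs!i"] ev_vals[of y' "bs!i"] by auto
qed

lemma pair_count: assumes y: "y \<in> NF" and y': "y' \<in> NF" and d1: "y \<noteq> y'" and d2: "y' \<noteq> \<sigma> y"
  shows "4 dvd card {i\<in>{..<36::nat}. sepr y i \<and> sepr y' i}"
proof -
  define g where "g = (\<lambda>i. ev y (bs!i) * ev y' (bs!i))"
  have yP: "y \<in> P" "y' \<in> P" using y y' NF_P by auto
  have A: "\<forall>i\<in>{..<36::nat}. g i = -1 \<or> g i = 0 \<or> g i = 1" using gvals unfolding g_def by blast
  have "sum g {..<36} = 0" using esum0[OF yP d1 d2] unfolding g_def by simp
  hence pn: "card {i\<in>{..<36::nat}. g i = 1} = card {i\<in>{..<36::nat}. g i = -1}"
    using sign_sum(1)[OF finite_lessThan A] by simp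
  have ev: "even (card {i\<in>{..<36::nat}. g i = -1})" using parity[OF yP] unfolding g_def by simp
  have "{i\<in>{..<36::nat}. sepr y i \<and> sepr y' i} = {i\<in>{..<36::nat}. g i \<noteq> 0}"
    unfolding g_def using ev_sep by auto
  hence "card {i\<in>{..<36::nat}. sepr y i \<and> sepr y' i} = 2 * card {i\<in>{..<36::nat}. g i = -1}"
    using sign_sum(2)[OF finite_lessThan A] pn by simp
  moreover obtain k where "card {i\<in>{..<36::nat}. g i = -1} = 2 * k" using ev by (auto elim: evenE)
  ultimately have "card {i\<in>{..<36::nat}. sepr y i \<and> sepr y' i} = 4 * k" by simp
  thus ?thesis by simp
qed

lemma no18: assumes "card {x\<in>P. \<sigma> x = x} = 18" shows False
proof -
  have cNF: "card NF = 18" using NF_card assms by simp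
  have cNB: "card NB = 18" using NB_NF cNF by simp
  have all: "\<And>y i. y \<in> NF \<Longrightarrow> i \<in> NB \<Longrightarrow> sepr y i"
  proof -
    fix y i assume y: "y \<in> NF" and i: "i \<in> NB"
    have "{y\<in>P. sepr y i} \<subseteq> NF" using sep_nf by auto
    moreover have "card {y\<in>P. sepr y i} = card NF" using sep_blk i cNF unfolding NB_def by auto
    ultimately have "{y\<in>P. sepr y i} = NF" using finNF by (metis card_subset_eq)
    thus "sepr y i" using y by auto
  qed
  obtain y where y: "y \<in> NF" using cNF by (metis card.empty ex_in_conv zero_neq_numeral)
  have "\<not> NF \<subseteq> {y, \<sigma> y}"
  proof
    assume "NF \<subseteq> {y, \<sigma> y}"
    hence "card NF \<le> card {y, \<sigma> y}" by (rule card_mono[rotated]) simp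
    also have "\<dots> \<le> 2" by (cases "y = \<sigma> y") auto
    finally show False using cNF by simp
  qed
  then obtain y' where y': "y' \<in> NF" "y' \<noteq> y" "y' \<noteq> \<sigma> y" by auto
  have yP: "y \<in> P" "y' \<in> P" using y y' NF_P by auto
  define g where "g = (\<lambda>i. ev y (bs!i) * ev y' (bs!i))"
  have A: "\<forall>i\<in>{..<36::nat}. g i = -1 \<or> g i = 0 \<or> g i = 1" using gvals unfolding g_def by blast
  have "sum g {..<36} = 0" using esum0[OF yP y'(2)[symmetric] y'(3)] unfolding g_def by simp
  hence pn: "card {i\<in>{..<36::nat}. g i = 1} = card {i\<in>{..<36::nat}. g i = -1}"
    using sign_sum(1)[OF finite_lessThan A] by simp
  have ev: "even (card {i\<in>{..<36::nat}. g i = -1})" using parity[OF yP] unfolding g_def by simp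
  have "{i\<in>{..<36::nat}. g i \<noteq> 0} = NB"
  proof (rule set_eqI)
    fix i show "i \<in> {i\<in>{..<36::nat}. g i \<noteq> 0} \<longleftrightarrow> i \<in> NB"
      using all[OF y, of i] all[OF y'(1), of i] sep_nb[of i y] yP ev_sep[of y i] ev_sep[of y' i]
      unfolding g_def NB_def by auto
  qed
  hence "card NB = 2 * card {i\<in>{..<36::nat}. g i = -1}"
    using sign_sum(2)[OF finite_lessThan A] pn by simp
  hence "card {i\<in>{..<36::nat}. g i = -1} = 9" using cNB by simp
  thus False using ev by simp
qed

lemma no14: assumes "card {x\<in>P. \<sigma> x = x} = 14" shows False
proof -
  have cNF: "card NF = 22" using NF_card assms by simp
  have cNB: "card NB = 22" using NB_NF cNF by simp
  have finNB: "finite NB" unfolding NB_def by simp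
  define Z where "Z = (\<lambda>y. {i\<in>{..<36::nat}. nfb i \<and> \<not> sepr y i})"
  have ZNB: "Z y \<subseteq> NB" for y unfolding Z_def NB_def by auto
  have finZ: "finite (Z y)" for y unfolding Z_def by simp
  have cZ: "card (Z y) = 4" if y: "y \<in> NF" for y
  proof -
    have yP: "y \<in> P" using y NF_P by auto
    have "NB = Z y \<union> {i\<in>{..<36::nat}. sepr y i}" unfolding Z_def NB_def using sep_nb[OF _ yP] NB_def by auto
    moreover have "card (Z y \<union> {i\<in>{..<36::nat}. sepr y i}) = card (Z y) + card {i\<in>{..<36::nat}. sepr y i}"
      by (rule card_Un_disjoint) (auto simp: Z_def)
    moreover have "card {i\<in>{..<36::nat}. sepr y i} = 18" using sep_pt yP y unfolding NF_def by auto
    ultimately show ?thesis using cNB by simp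
  qed
  have Zs: "Z (\<sigma> y) = Z y" if y: "y \<in> NF" for y
    using inv[of y] y NF_P unfolding Z_def sepr_def by auto
  have cZZ: "card (Z y \<inter> Z y') = 2" if y: "y \<in> NF" and y': "y' \<in> NF" and d1: "y \<noteq> y'" and d2: "y' \<noteq> \<sigma> y" for y y'
  proof -
    define S where "S = {i\<in>{..<36::nat}. sepr y i \<and> sepr y' i}"
    have d: "4 dvd card S" using pair_count[OF y y' d1 d2] unfolding S_def .
    have yP: "y \<in> P" "y' \<in> P" using y y' NF_P by auto
    have NBe: "NB = S \<union> (Z y \<union> Z y')" unfolding S_def Z_def NB_def using sep_nb[OF _ yP(1)] sep_nb[OF _ yP(2)] NB_def by auto
    have cU: "card (S \<union> (Z y \<union> Z y')) = card S + card (Z y \<union> Z y')"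
      by (rule card_Un_disjoint) (auto simp: S_def Z_def)
    have e1: "card S + card (Z y \<union> Z y') = 22" using cU NBe cNB by simp
    have e2: "card (Z y \<union> Z y') + card (Z y \<inter> Z y') = 8"
      using card_Un_Int[OF finZ finZ, of y y'] cZ[OF y] cZ[OF y'] by simp
    have e3: "card (Z y \<inter> Z y') \<le> 4" using card_mono[OF finZ, of "Z y \<inter> Z y'" y] cZ[OF y] by auto
    obtain k where k: "card S = 4 * k" using d by auto
    show ?thesis using e1 e2 e3 k by presburger
  qed
  have rowsum: "(\<Sum>y'\<in>NF. int (card (Z y \<inter> Z y'))) = 48" if y: "y \<in> NF" for y
  proof -
    have "(\<Sum>y'\<in>NF. int (card (Z y \<inter> Z y'))) = (\<Sum>y'\<in>NF. 2 + 2 * (if y' \<in> {y, \<sigma> y} then 1 else 0))"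
    proof (rule sum.cong[OF refl])
      fix y' assume y': "y' \<in> NF"
      show "int (card (Z y \<inter> Z y')) = 2 + 2 * (if y' \<in> {y, \<sigma> y} then 1 else 0)"
      proof (cases "y' = y \<or> y' = \<sigma> y")
        case True thus ?thesis using cZ[OF y] Zs[OF y] by auto
      next
        case False thus ?thesis using cZZ[OF y y'] by auto
      qed
    qed
    also have "\<dots> = (\<Sum>y'\<in>NF. 2) + 2 * (\<Sum>y'\<in>NF. if y' \<in> {y, \<sigma> y} then 1 else 0)"
      by (simp only: sum.distrib sum_distrib_left)
    also have "\<dots> = 2 * int (card NF) + 2 * int (card {y'\<in>NF. y' \<in> {y, \<sigma> y}})"
      by (simp only: card_int_sum[OF finNF]) simp
    also have "{y'\<in>NF. y' \<in> {y, \<sigma> y}} = {y, \<sigma> y}" using y sNF[OF y] by auto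
    also have "card {y, \<sigma> y} = 2" using sNF[OF y] by auto
    finally show ?thesis using cNF by simp
  qed
  have "(\<Sum>y\<in>NF. \<Sum>y'\<in>NF. int (card (Z y \<inter> Z y'))) = (\<Sum>y\<in>NF. 48)"
    using rowsum by (rule sum.cong[OF refl])
  hence L: "(\<Sum>y\<in>NF. \<Sum>y'\<in>NF. int (card (Z y \<inter> Z y'))) = 1056" using cNF by simp
  have "(\<Sum>y\<in>NF. \<Sum>y'\<in>NF. int (card (Z y \<inter> Z y')))
      = (\<Sum>y\<in>NF. \<Sum>y'\<in>NF. \<Sum>i\<in>NB. (if i \<in> Z y then 1 else 0) * (if i \<in> Z y' then 1 else 0))"
  proof (intro sum.cong refl)
    fix y y'
    have "Z y \<inter> Z y' = {i\<in>NB. i \<in> Z y \<and> i \<in> Z y'}" using ZNB by auto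
    hence "int (card (Z y \<inter> Z y')) = (\<Sum>i\<in>NB. if i \<in> Z y \<and> i \<in> Z y' then 1 else 0)"
      using card_int_sum[OF finNB] by simp
    moreover have "(\<Sum>i\<in>NB. if i \<in> Z y \<and> i \<in> Z y' then 1 else 0) = (\<Sum>i\<in>NB. (if i \<in> Z y then 1 else 0) * (if i \<in> Z y' then 1 else (0::int)))"
      by (rule sum.cong) auto
    ultimately show "int (card (Z y \<inter> Z y')) = (\<Sum>i\<in>NB. (if i \<in> Z y then 1 else 0) * (if i \<in> Z y' then 1 else 0))"
      by simp
  qed
  also have "\<dots> = (\<Sum>y\<in>NF. \<Sum>i\<in>NB. \<Sum>y'\<in>NF. (if i \<in> Z y then 1 else 0) * (if i \<in> Z y' then 1 else 0))"
    by (rule sum.cong[OF refl], rule sum.swap)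
  also have "\<dots> = (\<Sum>i\<in>NB. \<Sum>y\<in>NF. \<Sum>y'\<in>NF. (if i \<in> Z y then 1 else 0) * (if i \<in> Z y' then 1 else 0))"
    by (rule sum.swap)
  also have "\<dots> = (\<Sum>i\<in>NB. (\<Sum>y\<in>NF. if i \<in> Z y then 1 else 0) * (\<Sum>y'\<in>NF. if i \<in> Z y' then 1 else 0))"
    by (simp only: sum_product)
  also have "\<dots> = (\<Sum>i\<in>NB. 16)"
  proof (rule sum.cong[OF refl])
    fix i assume i: "i \<in> NB"
    have "{y\<in>NF. i \<in> Z y} = NF - {y\<in>P. sepr y i}" using i NF_P unfolding Z_def NB_def by auto
    moreover have "card (NF - {y\<in>P. sepr y i}) = 4"
    proof -
      have "{y\<in>P. sepr y i} \<subseteq> NF" using sep_nf by auto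
      moreover have "card {y\<in>P. sepr y i} = 18" using sep_blk i unfolding NB_def by auto
      ultimately show ?thesis using cNF finNF by (simp add: card_Diff_subset finite_subset)
    qed
    ultimately have "(\<Sum>y\<in>NF. if i \<in> Z y then 1 else 0) = (4::int)"
      using card_int_sum[OF finNF, of "\<lambda>y. i \<in> Z y"] by simp
    thus "(\<Sum>y\<in>NF. if i \<in> Z y then 1 else 0) * (\<Sum>y'\<in>NF. if i \<in> Z y' then 1 else 0) = (16::int)" by simp
  qed
  also have "\<dots> = 352" using cNB by simp
  finally show False using L by simp
qed

end

theorem mainTheorem2:
  fixes P :: "'a set" and B :: "'a set multiset" and \<sigma> :: "'a \<Rightarrow> 'a"
  assumes "symmetric_design P B 36 15 6"
    and "design_automorphism P B \<sigma>"
    and "order_two_on P \<sigma>"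
  shows "card {x \<in> P. \<sigma> x = x} \<noteq> 18 \<and> card {x \<in> P. \<sigma> x = x} \<noteq> 14"
proof -
  obtain bs where bs: "mset bs = B" using ex_mset by blast
  note sd = assms(1)[unfolded symmetric_design_def]
  note da = assms(2)[unfolded design_automorphism_def]
  note ot = assms(3)[unfolded order_two_on_def]
  have len: "length bs = 36" using sd bs by (metis size_mset)
  have inB: "i < 36 \<Longrightarrow> bs!i \<in># B" for i using bs len by (metis nth_mem set_mset_mset)
  interpret invdes P bs \<sigma>
  proof
    show "finite P" "card P = 36" using sd by auto
    show "length bs = 36" by (rule len)
    show "\<And>i. i < 36 \<Longrightarrow> bs!i \<subseteq> P \<and> card (bs!i) = 15" using sd inB by blast
    show "bij_betw \<sigma> P P" using da by blast
    show "\<And>x. x\<in>P \<Longrightarrow> \<sigma> (\<sigma> x) = x" using ot by blast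
    show "image_mset (\<lambda>b. \<sigma>`b) (mset bs) = mset bs" using da bs by simp
    fix x y assume xy: "x\<in>P" "y\<in>P" "x\<noteq>y"
    have "size (filter_mset (\<lambda>b. x \<in> b \<and> y \<in> b) B) = 6" using sd xy by blast
    hence "length (filter (\<lambda>b. x \<in> b \<and> y \<in> b) bs) = 6" using bs by (metis mset_filter size_mset)
    hence "card {i. i < length bs \<and> x \<in> bs!i \<and> y \<in> bs!i} = 6" by (simp add: length_filter_conv_card)
    thus "card {i\<in>{..<36}. x \<in> bs!i \<and> y \<in> bs!i} = 6" using len by simp
  qed
  show ?thesis using no18 no14 by blast
qed

end
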